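(* Let $V$, $u$, $L(V,u)=\mathbb{H}^m(-1)\cap(V+u)\neq\emptyset$, $\xi$, $a$, $\alpha$, $\beta$ be as follows: $V$ a linear hyperplane of $\mathbb{R}^{m,1}$, $u\in\mathbb{R}^{m,1}$, $\xi\in V^\perp$ nonzero with $a=\langle u,\xi\rangle\ge0$, $\langle\xi,\xi\rangle\in\{1,-1,0\}$, $\beta=(\langle\xi,\xi\rangle+a^2)^{-1/2}$, $\alpha=\beta a$. Let $M$ be an $n$-dimensional submanifold of $L(V,u)$, and let $f_1(\cdot,t)$, $F(\cdot,t)$ be the mean curvature flows of $M$ in $L(V,u)$ and in $\mathbb{R}^{m,1}$ respectively. If $\alpha\neq1$, then for $x\in M$, $$F(x,t)=\sqrt{2nt(1-\alpha^2)+1}\,\big(f_1(x,s_\alpha(t))-\eta\big)+\eta,$$ where $\eta=\frac{\alpha\beta}{1-\alpha^2}\xi$ and $s_\alpha(t)=\frac{1}{2n(1-\alpha^2)}\ln\big(2nt(1-\alpha^2)+1\big)$. If $\alpha=1$, then $F(x,t)=f_1(x,t)-nt\beta\xi$. (These hold whenever the right-hand sides are defined.)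
   Context: $\mathbb{R}^{m,1}$ denotes $\mathbb{R}^{m+1}$ with $\langle x,y\rangle=\sum_{i=1}^m x_iy_i-x_{m+1}y_{m+1}$; $\mathbb{H}^m(-1)=\{x:\langle x,x\rangle=-1,\ x_{m+1}>0\}$; $L(V,u)$ carries the induced Riemannian metric. A mean curvature flow of a submanifold $M$ in $X$ is a map $f:M\times I\to X$, $I\ni0$, with $f(\cdot,0)$ the inclusion and $\partial_tf$ the unnormalized mean curvature vector of $f(\cdot,t)$ in $X$. *)

theory Defs
  imports "HOL-Analysis.Analysis"
begin

text \<open>R^{m,1} is modelled as real^'k (so m+1 = CARD('k)) with a distinguished
  timelike coordinate tm :: 'k (the paper's coordinate x_{m+1}).\<close>

definition mink :: "'k::finite \<Rightarrow> real^'k \<Rightarrow> real^'k \<Rightarrow> real" where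
  "mink tm x y = (\<Sum>i\<in>UNIV. x$i * y$i) - 2 * (x$tm * y$tm)"

definition hyp_space :: "'k::finite \<Rightarrow> (real^'k) set" where
  "hyp_space tm = {x. mink tm x x = -1 \<and> x$tm > 0}"

definition Lset :: "'k::finite \<Rightarrow> (real^'k) set \<Rightarrow> real^'k \<Rightarrow> (real^'k) set" where
  "Lset tm V u = hyp_space tm \<inter> {v + u | v. v \<in> V}"

fun Ck :: "nat \<Rightarrow> ('a::euclidean_space \<Rightarrow> 'b::real_normed_vector) \<Rightarrow> 'a set \<Rightarrow> bool" where
  "Ck 0 f U = continuous_on U f"
| "Ck (Suc k) f U = ((\<forall>x\<in>U. f differentiable (at x)) \<and>
      (\<forall>i\<in>Basis. Ck k (\<lambda>x. frechet_derivative f (at x) i) U))"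

definition smooth_on :: "('a::euclidean_space \<Rightarrow> 'b::real_normed_vector) \<Rightarrow> 'a set \<Rightarrow> bool" where
  "smooth_on f U = (\<forall>k. Ck k f U)"

definition chart :: "(real^'k::finite) set \<Rightarrow> (real^'n::finite) set \<Rightarrow> (real^'n \<Rightarrow> real^'k) \<Rightarrow> bool" where
  "chart M U \<phi> = (open U \<and> smooth_on \<phi> U \<and> (\<exists>W. open W \<and> \<phi> ` U = M \<inter> W) \<and> inj_on \<phi> U
      \<and> continuous_on (\<phi> ` U) (inv_into U \<phi>)
      \<and> (\<forall>u\<in>U. inj (frechet_derivative \<phi> (at u))))"

definition submanifold :: "'n::finite itself \<Rightarrow> (real^'k::finite) set \<Rightarrow> bool" where
  "submanifold _ M = (\<forall>p\<in>M. \<exists>U (\<phi>::real^'n \<Rightarrow> real^'k). chart M U \<phi> \<and> p \<in> \<phi> ` U)"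

definition tangent_space :: "(real^'k::finite) set \<Rightarrow> real^'k \<Rightarrow> (real^'k) set" where
  "tangent_space N p = {v. \<exists>\<gamma> e. e > 0 \<and> (\<forall>s\<in>{-e<..<e}. \<gamma> s \<in> N) \<and> \<gamma> 0 = p
       \<and> (\<gamma> has_vector_derivative v) (at 0)}"

definition normal_space :: "'k::finite \<Rightarrow> (real^'k) set \<Rightarrow> real^'k \<Rightarrow> ('n::finite \<Rightarrow> real^'k) \<Rightarrow> (real^'k) set" where
  "normal_space tm N p D = tangent_space N p \<inter> {w. \<forall>i. mink tm w (D i) = 0}"

definition nproj :: "'k::finite \<Rightarrow> (real^'k) set \<Rightarrow> real^'k \<Rightarrow> ('n::finite \<Rightarrow> real^'k) \<Rightarrow> real^'k \<Rightarrow> real^'k" where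
  "nproj tm N p D v = (THE w. w \<in> normal_space tm N p D \<and>
      (\<forall>z\<in>normal_space tm N p D. mink tm (v - w) z = 0))"

definition pd :: "(real^'n::finite \<Rightarrow> real^'k::finite) \<Rightarrow> 'n \<Rightarrow> real^'n \<Rightarrow> real^'k" where
  "pd X i u = vector_derivative (\<lambda>r. X (u + r *\<^sub>R axis i 1)) (at 0)"

definition gram :: "'k::finite \<Rightarrow> (real^'n::finite \<Rightarrow> real^'k) \<Rightarrow> real^'n \<Rightarrow> real^'n^'n" where
  "gram tm X u = (\<chi> i j. mink tm (pd X i u) (pd X j u))"

text \<open>Unnormalized mean curvature vector (trace of the second fundamental form)
  at X u of the immersion X into the ambient N.\<close>
definition mean_curv :: "'k::finite \<Rightarrow> (real^'k) set \<Rightarrow> (real^'n::finite \<Rightarrow> real^'k) \<Rightarrow> real^'n \<Rightarrow> real^'k" where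
  "mean_curv tm N X u = (\<Sum>i\<in>UNIV. \<Sum>j\<in>UNIV. (matrix_inv (gram tm X u))$i$j *\<^sub>R
       nproj tm N (X u) (\<lambda>l. pd X l u) (pd (pd X j) i u))"

definition mcf :: "'n::finite itself \<Rightarrow> 'k::finite \<Rightarrow> (real^'k) set \<Rightarrow> (real^'k) set \<Rightarrow> real set
      \<Rightarrow> (real^'k \<Rightarrow> real \<Rightarrow> real^'k) \<Rightarrow> bool" where
  "mcf _ tm N M I f = (is_interval I \<and> 0 \<in> I \<and> (\<forall>x\<in>M. f x 0 = x) \<and>
     (\<forall>x\<in>M. \<forall>t\<in>I. f x t \<in> N) \<and>
     (\<forall>U (\<phi>::real^'n \<Rightarrow> real^'k). chart M U \<phi> \<longrightarrow> (\<forall>t\<in>I.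
        Ck 2 (\<lambda>v. f (\<phi> v) t) U \<and>
        (\<forall>u\<in>U. invertible (gram tm (\<lambda>v. f (\<phi> v) t) u) \<and>
           ((\<lambda>s. f (\<phi> u) s) has_vector_derivative mean_curv tm N (\<lambda>v. f (\<phi> v) t) u) (at t within I)))))"

end

theory Submission
  imports Defs
begin

definition rfl :: "'k::finite \<Rightarrow> real^'k \<Rightarrow> real^'k" where
  "rfl tm y = (\<chi> i. if i = tm then - y$i else y$i)"

lemma mink_alt: "mink tm x y = x \<bullet> rfl tm y"
proof -
  have "(\<Sum>i\<in>UNIV. x$i * (if i = tm then - y$i else y$i)) =
        (\<Sum>i\<in>UNIV. x$i * y$i - (if i = tm then 2 * (x$i * y$i) else 0))"
    by (rule sum.cong) auto
  also have "\<dots> = (\<Sum>i\<in>UNIV. x$i * y$i) - 2 * (x$tm * y$tm)"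
    by (simp add: sum_subtractf)
  finally show ?thesis unfolding mink_def rfl_def inner_vec_def by simp
qed

lemma linear_rfl: "linear (rfl tm)"
  unfolding linear_iff by (auto simp: rfl_def vec_eq_iff)

lemma rfl_rfl[simp]: "rfl tm (rfl tm y) = y"
  by (auto simp: rfl_def vec_eq_iff)

lemma mink_sym: "mink tm x y = mink tm y x"
  unfolding mink_def by (simp add: mult.commute)

lemma mink_add_left: "mink tm (x + z) y = mink tm x y + mink tm z y"
  by (simp add: mink_alt inner_add_left)
lemma mink_add_right: "mink tm y (x + z) = mink tm y x + mink tm y z"
  by (metis mink_sym mink_add_left)
lemma mink_diff_left: "mink tm (x - z) y = mink tm x y - mink tm z y"
  by (simp add: mink_alt inner_diff_left)
lemma mink_diff_right: "mink tm y (x - z) = mink tm y x - mink tm y z"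
  by (metis mink_sym mink_diff_left)
lemma mink_scale_left: "mink tm (c *\<^sub>R x) y = c * mink tm x y"
  by (simp add: mink_alt)
lemma mink_scale_right: "mink tm y (c *\<^sub>R x) = c * mink tm y x"
  by (metis mink_sym mink_scale_left)
lemma mink_zero_left[simp]: "mink tm 0 y = 0" by (simp add: mink_alt)
lemma mink_zero_right[simp]: "mink tm y 0 = 0" by (metis mink_sym mink_zero_left)
lemma mink_neg_left: "mink tm (- x) y = - mink tm x y" by (simp add: mink_alt)
lemma mink_neg_right: "mink tm y (- x) = - mink tm y x" by (metis mink_sym mink_neg_left)
lemma mink_sum_left: "mink tm (\<Sum>i\<in>A. f i) y = (\<Sum>i\<in>A. mink tm (f i) y)"
  by (simp add: mink_alt inner_sum_left)
lemma mink_sum_right: "mink tm y (\<Sum>i\<in>A. f i) = (\<Sum>i\<in>A. mink tm y (f i))"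
  by (simp add: mink_alt inner_sum_right linear_sum[OF linear_rfl] o_def)

lemmas mink_simps = mink_add_left mink_add_right mink_diff_left mink_diff_right
  mink_scale_left mink_scale_right mink_neg_left mink_neg_right mink_sum_left mink_sum_right

lemma mink_nondeg: "(\<And>x. mink tm y x = 0) \<Longrightarrow> y = 0"
proof -
  assume "\<And>x. mink tm y x = 0"
  then have "mink tm y (rfl tm y) = 0" by blast
  then show "y = 0" by (simp add: mink_alt)
qed

lemma has_derivative_mink:
  assumes "(f has_derivative f') (at x within S)" "(g has_derivative g') (at x within S)"
  shows "((\<lambda>x. mink tm (f x) (g x)) has_derivative
          (\<lambda>h. mink tm (f' h) (g x) + mink tm (f x) (g' h))) (at x within S)"
proof -
  have bl: "bounded_linear (rfl tm)" using linear_rfl linear_conv_bounded_linear by blast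
  have g2: "((\<lambda>x. rfl tm (g x)) has_derivative (\<lambda>h. rfl tm (g' h))) (at x within S)"
    using bounded_linear.has_derivative[OF bl assms(2)] .
  have "((\<lambda>x. f x \<bullet> rfl tm (g x)) has_derivative
          (\<lambda>h. f x \<bullet> rfl tm (g' h) + f' h \<bullet> rfl tm (g x))) (at x within S)"
    by (rule has_derivative_inner[OF assms(1) g2])
  then show ?thesis by (simp add: mink_alt add.commute)
qed

lemma lam_deriv:
  fixes c d :: real
  assumes "d \<noteq> 0"
  shows "((\<lambda>s. s^2 * (c / (d * (1 + sqrt (1 + e * s^2))))) has_real_derivative 0) (at 0)"
proof -
  have "\<exists>K'. ((\<lambda>s. c / (d * (1 + sqrt (1 + e * s^2)))) has_real_derivative K') (at 0)"
    using assms by (intro exI) (auto intro!: derivative_eq_intros)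
  then obtain K' where K': "((\<lambda>s. c / (d * (1 + sqrt (1 + e * s^2)))) has_real_derivative K') (at 0)" by blast
  have s2: "((\<lambda>s::real. s^2) has_real_derivative 0) (at 0)"
    using DERIV_pow[of 2 0] by simp
  show ?thesis using DERIV_mult[OF s2 K'] by simp
qed

lemma tangent_UNIV: "tangent_space UNIV p = UNIV"
proof -
  have "v \<in> tangent_space UNIV p" for v
  proof -
    have "((\<lambda>s. p + s *\<^sub>R v) has_vector_derivative v) (at 0)"
      by (auto intro!: derivative_eq_intros)
    then show ?thesis unfolding tangent_space_def
      by (intro CollectI exI[of _ "\<lambda>s. p + s *\<^sub>R v"] exI[of _ 1]) auto
  qed
  then show ?thesis by blast
qed

lemma const_deriv_zero:
  fixes h :: "real \<Rightarrow> real"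
  assumes "(h has_derivative h') (at 0)" "e > 0" "\<And>s. s \<in> {-e<..<e} \<Longrightarrow> h s = c"
  shows "h' 1 = 0"
proof -
  have "((\<lambda>s. c) has_derivative (\<lambda>_. 0)) (at 0)" by (rule has_derivative_const)
  then have "(h has_derivative (\<lambda>_. 0)) (at 0)"
    by (rule has_derivative_transform_within_open[of _ _ _ _ "{-e<..<e}"]) (use assms in auto)
  then have "h' = (\<lambda>_. 0)" using assms(1) has_derivative_unique by blast
  then show ?thesis by simp
qed

lemma tangent_L:
  fixes \<xi> p :: "real^'k::finite"
  assumes D: "mink tm \<xi> \<xi> + a\<^sup>2 > 0"
    and p: "p \<in> {x. mink tm x x = -1 \<and> 0 < x$tm \<and> mink tm x \<xi> = a}"
  shows "tangent_space {x. mink tm x x = -1 \<and> 0 < x$tm \<and> mink tm x \<xi> = a} p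
         = {w. mink tm w p = 0 \<and> mink tm w \<xi> = 0}" (is "tangent_space ?L p = ?Q")
proof (intro equalityI subsetI)
  fix w assume "w \<in> tangent_space ?L p"
  then obtain \<gamma> e where e: "e > 0" and g: "\<And>s. s\<in>{-e<..<e} \<Longrightarrow> \<gamma> s \<in> ?L" and g0: "\<gamma> 0 = p"
    and gd: "(\<gamma> has_vector_derivative w) (at 0)"
    unfolding tangent_space_def by blast
  have gd': "(\<gamma> has_derivative (\<lambda>r. r *\<^sub>R w)) (at 0)" using gd by (simp add: has_vector_derivative_def)
  have "((\<lambda>s. mink tm (\<gamma> s) (\<gamma> s)) has_derivative
          (\<lambda>r. mink tm (r *\<^sub>R w) (\<gamma> 0) + mink tm (\<gamma> 0) (r *\<^sub>R w))) (at 0)"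
    by (rule has_derivative_mink[OF gd' gd'])
  from const_deriv_zero[OF this e, of "-1"] g
  have "mink tm w p + mink tm p w = 0" by (auto simp: g0 mink_simps)
  then have 1: "mink tm w p = 0" by (simp add: mink_sym)
  have "((\<lambda>s. mink tm (\<gamma> s) \<xi>) has_derivative
          (\<lambda>r. mink tm (r *\<^sub>R w) \<xi> + mink tm (\<gamma> 0) 0)) (at 0)"
    by (rule has_derivative_mink[OF gd' has_derivative_const])
  from const_deriv_zero[OF this e, of a] g
  have 2: "mink tm w \<xi> = 0" by (auto simp: mink_simps)
  show "w \<in> ?Q" using 1 2 by simp
next
  fix w assume w: "w \<in> ?Q"
  define \<epsilon> where "\<epsilon> = mink tm \<xi> \<xi>"
  define Dd where "Dd = \<epsilon> + a\<^sup>2"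
  define q where "q = mink tm w w"
  define z where "z = \<epsilon> *\<^sub>R p - a *\<^sub>R \<xi>"
  define lam where "lam = (\<lambda>s::real. s^2 * (q / (Dd * (1 + sqrt (1 + (\<epsilon> * q / Dd) * s^2)))))"
  define \<gamma> where "\<gamma> = (\<lambda>s. p + s *\<^sub>R w + lam s *\<^sub>R z)"
  have Dpos: "Dd > 0" using D by (simp add: Dd_def \<epsilon>_def)
  have pp: "mink tm p p = -1" "p$tm > 0" "mink tm p \<xi> = a" using p by auto
  have wp: "mink tm w p = 0" "mink tm w \<xi> = 0" using w by auto
  have lamd: "(lam has_real_derivative 0) (at 0)"
    unfolding lam_def by (rule lam_deriv) (use Dpos in simp)
  have gd: "(\<gamma> has_vector_derivative w) (at 0)"
    unfolding \<gamma>_def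
    using lamd
    by (auto intro!: derivative_eq_intros has_vector_derivative_real_field)
  have contl: "continuous (at 0) lam" unfolding lam_def
    by (intro continuous_intros) (use Dpos in auto)
  have contg: "continuous (at 0) (\<lambda>s. \<gamma> s $ tm)" unfolding \<gamma>_def
    by (intro continuous_intros contl)
  have ev1: "\<forall>\<^sub>F s in at 0. 0 < 1 + (\<epsilon> * q / Dd) * s^2"
  proof (rule order_tendstoD(1))
    show "((\<lambda>s::real. 1 + (\<epsilon> * q / Dd) * s^2) \<longlongrightarrow> 1 + (\<epsilon> * q / Dd) * 0^2) (at 0)"
      by (intro tendsto_intros)
  qed simp
  have ev2: "\<forall>\<^sub>F s in at 0. 0 < \<gamma> s $ tm"
  proof (rule order_tendstoD(1))
    show "((\<lambda>s. \<gamma> s $ tm) \<longlongrightarrow> \<gamma> 0 $ tm) (at 0)"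
      using contg by (simp add: continuous_at)
    show "0 < \<gamma> 0 $ tm" using pp by (simp add: \<gamma>_def lam_def)
  qed
  obtain e where e: "e > 0" and he: "\<And>s. s \<noteq> 0 \<Longrightarrow> dist s 0 < e \<Longrightarrow>
      0 < 1 + (\<epsilon> * q / Dd) * s^2 \<and> 0 < \<gamma> s $ tm"
    using eventually_conj[OF ev1 ev2] unfolding eventually_at by auto
  have inL: "\<gamma> s \<in> ?L" if s: "s \<in> {-e<..<e}" for s
  proof -
    have pos: "0 < 1 + (\<epsilon> * q / Dd) * s^2 \<and> 0 < \<gamma> s $ tm"
    proof (cases "s = 0")
      case True then show ?thesis using pp by (simp add: \<gamma>_def lam_def)
    next
      case False then show ?thesis using he s by (auto simp: dist_real_def)
    qed
    define r where "r = sqrt (1 + (\<epsilon> * q / Dd) * s^2)"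
    have r0: "r \<ge> 0" unfolding r_def using pos by (simp del: times_divide_eq_left)
    have r2: "r^2 = 1 + (\<epsilon> * q / Dd) * s^2" unfolding r_def using pos by simp
    have lr: "lam s * (Dd * (1 + r)) = s^2 * q"
    proof -
      have "1 + r > 0" using r0 by linarith
      then have "Dd * (1 + r) \<noteq> 0" using Dpos by simp
      then show ?thesis unfolding lam_def r_def[symmetric] by simp
    qed
    have er: "\<epsilon> * (s^2 * q) = (r^2 - 1) * Dd" using r2 Dpos by (simp add: field_simps)
    have key: "s^2 * q = 2 * lam s * Dd + (lam s)^2 * \<epsilon> * Dd"
    proof -
      have "(lam s)^2 * \<epsilon> * Dd * (1 + r) = lam s * \<epsilon> * (lam s * (Dd * (1 + r)))"
        by (simp add: power2_eq_square algebra_simps)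
      also have "\<dots> = lam s * \<epsilon> * (s^2 * q)" using lr by simp
      also have "\<dots> = lam s * (\<epsilon> * (s^2 * q))" by simp
      also have "\<dots> = lam s * ((r^2 - 1) * Dd)" by (simp only: er)
      also have "\<dots> = lam s * Dd * (r - 1) * (1 + r)" by (simp add: power2_eq_square algebra_simps)
      finally have "(lam s)^2 * \<epsilon> * Dd = lam s * Dd * (r - 1)" using r0 by simp
      then show ?thesis using lr by (simp add: algebra_simps)
    qed
    have f0: "mink tm \<xi> p = a" "mink tm p w = 0" "mink tm \<xi> w = 0" "mink tm \<xi> \<xi> = \<epsilon>"
      using pp wp by (simp_all add: mink_sym[of tm \<xi> p] mink_sym[of tm p w] mink_sym[of tm \<xi> w] \<epsilon>_def)
    have zs: "mink tm p z = - Dd" "mink tm w z = 0" "mink tm z \<xi> = 0" "mink tm \<xi> z = 0"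
      using pp wp f0 by (simp_all add: z_def Dd_def mink_diff_left mink_diff_right mink_scale_left mink_scale_right power2_eq_square)
    have zs2: "mink tm z z = - \<epsilon> * Dd" "mink tm z p = - Dd" "mink tm z w = 0"
      using pp wp f0 zs by (simp_all add: z_def Dd_def mink_diff_left mink_diff_right mink_scale_left mink_scale_right power2_eq_square algebra_simps)
    have "mink tm (\<gamma> s) (\<gamma> s) = -1 + s^2 * q - 2 * lam s * Dd - (lam s)^2 * \<epsilon> * Dd"
      unfolding \<gamma>_def using pp wp zs zs2 f0
      by (simp add: mink_add_left mink_add_right mink_scale_left mink_scale_right q_def power2_eq_square algebra_simps)
    also have "\<dots> = -1" using key by simp
    finally have 1: "mink tm (\<gamma> s) (\<gamma> s) = -1" .
    have 2: "mink tm (\<gamma> s) \<xi> = a" unfolding \<gamma>_def using pp wp zs by (simp add: mink_simps)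
    show ?thesis using 1 2 pos by simp
  qed
  show "w \<in> tangent_space ?L p"
    unfolding tangent_space_def
    using e inL gd by (intro CollectI exI[of _ \<gamma>] exI[of _ e]) (auto simp: \<gamma>_def lam_def)
qed

lemma rfl_zero[simp]: "rfl tm 0 = 0" by (simp add: rfl_def vec_eq_iff)

lemma mink_rfl_left: "mink tm x y = rfl tm x \<bullet> y"
  by (metis mink_sym mink_alt inner_commute)

lemma V_eq:
  fixes V :: "(real^'k::finite) set"
  assumes V: "subspace V" "dim V = CARD('k) - 1"
    and perp: "\<forall>v\<in>V. mink tm \<xi> v = 0" and nz: "\<xi> \<noteq> 0"
  shows "V = {v. mink tm \<xi> v = 0}"
proof -
  have eq: "{v. mink tm \<xi> v = 0} = {v. rfl tm \<xi> \<bullet> v = 0}"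
    by (simp add: mink_rfl_left)
  have nz': "rfl tm \<xi> \<noteq> 0" using nz by (metis rfl_rfl rfl_zero)
  have d: "dim {v. rfl tm \<xi> \<bullet> v = 0} = CARD('k) - 1"
    using dim_hyperplane[OF nz'] by simp
  show ?thesis unfolding eq
    by (rule subspace_dim_equal) (use V perp d subspace_hyperplane eq in auto)
qed

lemma Lset_char:
  fixes V :: "(real^'k::finite) set"
  assumes V: "subspace V" "dim V = CARD('k) - 1"
    and perp: "\<forall>v\<in>V. mink tm \<xi> v = 0" and nz: "\<xi> \<noteq> 0"
  shows "Lset tm V u = {x. mink tm x x = -1 \<and> 0 < x$tm \<and> mink tm x \<xi> = mink tm u \<xi>}"
proof -
  have VV: "V = {v. mink tm \<xi> v = 0}" by (rule V_eq[OF assms])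
  have "x \<in> {v + u |v. v \<in> V} \<longleftrightarrow> mink tm x \<xi> = mink tm u \<xi>" for x
  proof
    assume "x \<in> {v + u |v. v \<in> V}"
    then obtain v where "v \<in> V" "x = v + u" by blast
    then show "mink tm x \<xi> = mink tm u \<xi>" using VV by (auto simp: mink_simps mink_sym)
  next
    assume "mink tm x \<xi> = mink tm u \<xi>"
    then have "x - u \<in> V" using VV by (auto simp: mink_simps mink_sym)
    then show "x \<in> {v + u |v. v \<in> V}" by (intro CollectI exI[of _ "x - u"]) auto
  qed
  then show ?thesis unfolding Lset_def hyp_space_def by auto
qed

lemma minv: "invertible A \<Longrightarrow> A ** matrix_inv A = mat 1 \<and> matrix_inv A ** A = mat 1"
  unfolding matrix_inv_def invertible_def by (rule someI_ex)

lemma nproj_eqI: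
  assumes sub: "\<And>x y. x \<in> normal_space tm N p D \<Longrightarrow> y \<in> normal_space tm N p D \<Longrightarrow> x - y \<in> normal_space tm N p D"
    and P: "\<And>x. P x \<in> normal_space tm N p D"
    and P2: "\<And>x z. z \<in> normal_space tm N p D \<Longrightarrow> mink tm (x - P x) z = 0"
  shows "nproj tm N p D v = P v"
  unfolding nproj_def
proof (rule the_equality)
  show "P v \<in> normal_space tm N p D \<and> (\<forall>z\<in>normal_space tm N p D. mink tm (v - P v) z = 0)"
    using P P2 by blast
next
  fix w assume w: "w \<in> normal_space tm N p D \<and> (\<forall>z\<in>normal_space tm N p D. mink tm (v - w) z = 0)"
  define y where "y = w - P v"
  have yS: "y \<in> normal_space tm N p D" using sub w P y_def by blast
  have yz: "mink tm y z = 0" if "z \<in> normal_space tm N p D" for z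
  proof -
    have "mink tm y z = mink tm (v - P v) z - mink tm (v - w) z" by (simp add: y_def mink_simps)
    then show ?thesis using that w P2 by simp
  qed
  have "mink tm y x = 0" for x
  proof -
    have "mink tm y x = mink tm y (x - P x) + mink tm y (P x)" by (simp add: mink_simps)
    also have "\<dots> = 0" using yz[OF P] P2[OF yS] by (simp add: mink_sym[of tm y])
    finally show ?thesis .
  qed
  then have "y = 0" by (rule mink_nondeg)
  then show "w = P v" by (simp add: y_def)
qed

definition gramD :: "'k::finite \<Rightarrow> ('n::finite \<Rightarrow> real^'k) \<Rightarrow> real^'n^'n" where
  "gramD tm D = (\<chi> i j. mink tm (D i) (D j))"

definition PU :: "'k::finite \<Rightarrow> ('n::finite \<Rightarrow> real^'k) \<Rightarrow> real^'k \<Rightarrow> real^'k" where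
  "PU tm D x = x - (\<Sum>i\<in>UNIV. (\<Sum>j\<in>UNIV. matrix_inv (gramD tm D) $ i $ j * mink tm x (D j)) *\<^sub>R D i)"

lemma gramD_sym: "gramD tm D $ i $ j = gramD tm D $ j $ i"
  by (simp add: gramD_def mink_sym)

lemma PU_perp:
  fixes D :: "'n::finite \<Rightarrow> real^'k::finite" and k :: 'n
  assumes inv: "invertible (gramD tm D)"
  shows "mink tm (PU tm D x) (D k) = 0"
proof -
  let ?g = "gramD tm D" and ?gi = "matrix_inv (gramD tm D)"
  have gg: "?g ** ?gi = mat 1" using minv[OF inv] by blast
  have e1: "mink tm (\<Sum>i\<in>UNIV. (\<Sum>j\<in>UNIV. ?gi $ i $ j * mink tm x (D j)) *\<^sub>R D i) (D k)
      = (\<Sum>i\<in>UNIV. (\<Sum>j\<in>UNIV. ?gi $ i $ j * mink tm x (D j)) * ?g $ k $ i)"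
    unfolding mink_sum_left mink_scale_left
    by (rule sum.cong[OF refl]) (simp add: gramD_def mink_sym[of tm "D i" "D k" for i])
  also have "\<dots> = (\<Sum>i\<in>UNIV. \<Sum>j\<in>UNIV. mink tm x (D j) * (?g $ k $ i * ?gi $ i $ j))"
  proof (rule sum.cong[OF refl])
    fix i
    show "(\<Sum>j\<in>UNIV. ?gi $ i $ j * mink tm x (D j)) * ?g $ k $ i =
          (\<Sum>j\<in>UNIV. mink tm x (D j) * (?g $ k $ i * ?gi $ i $ j))"
      unfolding sum_distrib_right by (rule sum.cong[OF refl]) (simp only: mult_ac)
  qed
  also have "\<dots> = (\<Sum>j\<in>UNIV. \<Sum>i\<in>UNIV. mink tm x (D j) * (?g $ k $ i * ?gi $ i $ j))"
    by (rule sum.swap)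
  also have "\<dots> = (\<Sum>j\<in>UNIV. mink tm x (D j) * (?g ** ?gi) $ k $ j)"
    by (simp only: matrix_matrix_mult_def vec_lambda_beta sum_distrib_left)
  also have "\<dots> = (\<Sum>j\<in>UNIV. mink tm x (D j) * (if k = j then 1 else 0))"
    by (simp only: gg mat_def vec_lambda_beta)
  also have "\<dots> = mink tm x (D k)" by (simp add: if_distrib cong: if_cong)
  finally show ?thesis unfolding PU_def by (simp add: mink_diff_left)
qed

lemma normal_UNIV: "normal_space tm UNIV p D = {w. \<forall>i. mink tm w (D i) = 0}"
  by (simp add: normal_space_def tangent_UNIV)

lemma PU_diff:
  assumes "\<And>i. mink tm z (D i) = 0"
  shows "mink tm (x - PU tm D x) z = 0"
  using assms by (simp add: PU_def mink_sum_left mink_scale_left mink_sym[of tm "D i" z for i])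

lemma nproj_UNIV:
  fixes D :: "'n::finite \<Rightarrow> real^'k::finite"
  assumes inv: "invertible (gramD tm D)"
  shows "nproj tm UNIV p D v = PU tm D v"
proof (rule nproj_eqI)
  fix x z assume "z \<in> normal_space tm UNIV p D"
  then show "mink tm (x - PU tm D x) z = 0" unfolding normal_UNIV by (intro PU_diff) auto
qed (auto simp: normal_UNIV mink_diff_left PU_perp[OF inv])

definition piL :: "'k::finite \<Rightarrow> real^'k \<Rightarrow> real^'k \<Rightarrow> real^'k \<Rightarrow> real^'k" where
  "piL tm \<xi> p y = (let \<epsilon> = mink tm \<xi> \<xi>; a = mink tm p \<xi>; Dd = \<epsilon> + a\<^sup>2 in
     (-(\<epsilon> * mink tm y p - a * mink tm y \<xi>) / Dd) *\<^sub>R p + ((a * mink tm y p + mink tm y \<xi>) / Dd) *\<^sub>R \<xi>)"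

lemma aux_div1:
  fixes Dd \<epsilon> a Y Z :: real
  assumes "Dd = \<epsilon> + a\<^sup>2" "Dd \<noteq> 0"
  shows "(-(\<epsilon> * Y - a * Z) / Dd) * (-1) + ((a * Y + Z) / Dd) * a = Y"
    and "(-(\<epsilon> * Y - a * Z) / Dd) * a + ((a * Y + Z) / Dd) * \<epsilon> = Z"
proof -
  have "(-(\<epsilon> * Y - a * Z) / Dd) * (-1) + ((a * Y + Z) / Dd) * a = ((\<epsilon> + a\<^sup>2) * Y) / Dd"
    using assms(2) by (simp add: field_simps power2_eq_square)
  also have "\<dots> = Y" using assms by simp
  finally show "(-(\<epsilon> * Y - a * Z) / Dd) * (-1) + ((a * Y + Z) / Dd) * a = Y" .
  have "(-(\<epsilon> * Y - a * Z) / Dd) * a + ((a * Y + Z) / Dd) * \<epsilon> = ((\<epsilon> + a\<^sup>2) * Z) / Dd"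
    using assms(2) by (simp add: field_simps power2_eq_square)
  also have "\<dots> = Z" using assms by simp
  finally show "(-(\<epsilon> * Y - a * Z) / Dd) * a + ((a * Y + Z) / Dd) * \<epsilon> = Z" .
qed

lemma piL_props:
  assumes Dpos: "mink tm \<xi> \<xi> + (mink tm p \<xi>)\<^sup>2 > 0" and pp: "mink tm p p = -1"
  shows "mink tm (piL tm \<xi> p y) p = mink tm y p" "mink tm (piL tm \<xi> p y) \<xi> = mink tm y \<xi>"
proof -
  define \<epsilon> where "\<epsilon> = mink tm \<xi> \<xi>"
  define a where "a = mink tm p \<xi>"
  have D0: "\<epsilon> + a\<^sup>2 \<noteq> 0" using Dpos by (simp add: \<epsilon>_def a_def)
  have ap: "mink tm \<xi> p = a" by (simp add: a_def mink_sym)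
  have "mink tm (piL tm \<xi> p y) p = (-(\<epsilon> * mink tm y p - a * mink tm y \<xi>) / (\<epsilon> + a\<^sup>2)) * (-1)
        + ((a * mink tm y p + mink tm y \<xi>) / (\<epsilon> + a\<^sup>2)) * a"
    unfolding piL_def Let_def \<epsilon>_def[symmetric] a_def[symmetric]
    by (simp add: mink_add_left mink_scale_left pp ap)
  also have "\<dots> = mink tm y p" by (rule aux_div1(1)[OF refl D0])
  finally show "mink tm (piL tm \<xi> p y) p = mink tm y p" .
  have "mink tm (piL tm \<xi> p y) \<xi> = (-(\<epsilon> * mink tm y p - a * mink tm y \<xi>) / (\<epsilon> + a\<^sup>2)) * a
        + ((a * mink tm y p + mink tm y \<xi>) / (\<epsilon> + a\<^sup>2)) * \<epsilon>"
    unfolding piL_def Let_def \<epsilon>_def[symmetric] a_def[symmetric]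
    by (simp add: mink_add_left mink_scale_left a_def \<epsilon>_def)
  also have "\<dots> = mink tm y \<xi>" by (rule aux_div1(2)[OF refl D0])
  finally show "mink tm (piL tm \<xi> p y) \<xi> = mink tm y \<xi>" .
qed

lemma piL_perp:
  assumes "mink tm z p = 0" "mink tm z \<xi> = 0"
  shows "mink tm (piL tm \<xi> p y) z = 0"
  using assms by (simp add: piL_def Let_def mink_add_left mink_scale_left mink_sym[of tm _ z])

lemma piL_cong:
  assumes "mink tm y p = mink tm y' p" "mink tm y \<xi> = mink tm y' \<xi>"
  shows "piL tm \<xi> p y = piL tm \<xi> p y'"
  using assms by (simp add: piL_def)

lemma nproj_L:
  fixes D :: "'n::finite \<Rightarrow> real^'k::finite"
  assumes Dpos: "mink tm \<xi> \<xi> + a\<^sup>2 > 0"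
    and p: "p \<in> {x. mink tm x x = -1 \<and> 0 < x$tm \<and> mink tm x \<xi> = a}"
    and inv: "invertible (gramD tm D)"
    and pD: "\<And>i. mink tm p (D i) = 0" and xD: "\<And>i. mink tm \<xi> (D i) = 0"
  shows "nproj tm {x. mink tm x x = -1 \<and> 0 < x$tm \<and> mink tm x \<xi> = a} p D v
         = PU tm D v - piL tm \<xi> p (PU tm D v)"
proof -
  let ?L = "{x. mink tm x x = -1 \<and> 0 < x$tm \<and> mink tm x \<xi> = a}"
  have pp: "mink tm p p = -1" "mink tm p \<xi> = a" using p by auto
  have Dpos': "mink tm \<xi> \<xi> + (mink tm p \<xi>)\<^sup>2 > 0" using Dpos pp by simp
  have NS: "normal_space tm ?L p D = {w. mink tm w p = 0 \<and> mink tm w \<xi> = 0 \<and> (\<forall>i. mink tm w (D i) = 0)}"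
    unfolding normal_space_def tangent_L[OF Dpos p] by auto
  show ?thesis
  proof (rule nproj_eqI)
    fix x y assume "x \<in> normal_space tm ?L p D" "y \<in> normal_space tm ?L p D"
    then show "x - y \<in> normal_space tm ?L p D" unfolding NS by (auto simp: mink_diff_left)
  next
    fix x
    let ?y = "PU tm D x"
    have "mink tm (piL tm \<xi> p ?y) (D i) = 0" for i
      by (rule piL_perp) (simp_all add: mink_sym[of tm "D i"] pD xD)
    then show "?y - piL tm \<xi> p ?y \<in> normal_space tm ?L p D"
      unfolding NS using piL_props[OF Dpos' pp(1)]
      by (auto simp: mink_diff_left PU_perp[OF inv])
  next
    fix x z assume z: "z \<in> normal_space tm ?L p D"
    let ?y = "PU tm D x"
    have "mink tm (x - (?y - piL tm \<xi> p ?y)) z = mink tm (x - ?y) z + mink tm (piL tm \<xi> p ?y) z"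
      by (simp add: mink_diff_left mink_add_left)
    also have "\<dots> = 0"
    proof -
      have zz: "mink tm z p = 0" "mink tm z \<xi> = 0" "\<And>i. mink tm z (D i) = 0" using z unfolding NS by auto
      show ?thesis using PU_diff[of tm z D x, OF zz(3)] piL_perp[OF zz(1,2)] by simp
    qed
    finally show "mink tm (x - (?y - piL tm \<xi> p ?y)) z = 0" .
  qed
qed

lemma gram_gramD: "gram tm X u = gramD tm (\<lambda>l. pd X l u)"
  by (simp add: gram_def gramD_def)

lemma trace_inv:
  fixes g :: "real^'n::finite^'n"
  assumes "invertible g"
  shows "(\<Sum>i\<in>UNIV. \<Sum>j\<in>UNIV. matrix_inv g $ i $ j * g $ j $ i) = real CARD('n)"
proof -
  have gg: "matrix_inv g ** g = mat 1" using minv[OF assms] by blast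
  have "(\<Sum>i\<in>UNIV. \<Sum>j\<in>UNIV. matrix_inv g $ i $ j * g $ j $ i) = (\<Sum>i\<in>UNIV. (matrix_inv g ** g) $ i $ i)"
    by (simp add: matrix_matrix_mult_def)
  also have "\<dots> = (\<Sum>i\<in>(UNIV::'n set). 1)" by (simp add: gg mat_def)
  finally show ?thesis by simp
qed

lemma mean_curv_diff:
  fixes X :: "real^'n::finite \<Rightarrow> real^'k::finite"
  assumes Dpos: "mink tm \<xi> \<xi> + a\<^sup>2 > 0"
    and p: "X u \<in> {x. mink tm x x = -1 \<and> 0 < x$tm \<and> mink tm x \<xi> = a}"
    and inv: "invertible (gram tm X u)"
    and pD: "\<And>i. mink tm (X u) (pd X i u) = 0" and xD: "\<And>i. mink tm \<xi> (pd X i u) = 0"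
    and Hxi: "\<And>i j. mink tm (pd (pd X j) i u) \<xi> = 0"
    and Hp: "\<And>i j. mink tm (pd (pd X j) i u) (X u) = - mink tm (pd X j u) (pd X i u)"
  shows "mean_curv tm UNIV X u = mean_curv tm {x. mink tm x x = -1 \<and> 0 < x$tm \<and> mink tm x \<xi> = a} X u
     + (real CARD('n) * mink tm \<xi> \<xi> / (mink tm \<xi> \<xi> + a\<^sup>2)) *\<^sub>R X u
     - (real CARD('n) * a / (mink tm \<xi> \<xi> + a\<^sup>2)) *\<^sub>R \<xi>"
proof -
  let ?L = "{x. mink tm x x = -1 \<and> 0 < x$tm \<and> mink tm x \<xi> = a}"
  define D where "D = (\<lambda>l. pd X l u)"
  define H where "H = (\<lambda>i j. pd (pd X j) i u)"
  define g where "g = gram tm X u"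
  define gi where "gi = matrix_inv g"
  define \<epsilon> where "\<epsilon> = mink tm \<xi> \<xi>"
  define Dd where "Dd = \<epsilon> + a\<^sup>2"
  define W where "W = (\<epsilon> / Dd) *\<^sub>R X u - (a / Dd) *\<^sub>R \<xi>"
  have gD: "g = gramD tm D" by (simp add: g_def D_def gram_gramD)
  have inv': "invertible (gramD tm D)" using inv gD g_def by simp
  have pp: "mink tm (X u) \<xi> = a" using p by simp
  have mU: "mean_curv tm UNIV X u = (\<Sum>i\<in>UNIV. \<Sum>j\<in>UNIV. gi $ i $ j *\<^sub>R PU tm D (H i j))"
    unfolding mean_curv_def gi_def g_def D_def[symmetric]
    by (simp add: nproj_UNIV[OF inv'] H_def)
  have mL: "mean_curv tm ?L X u = (\<Sum>i\<in>UNIV. \<Sum>j\<in>UNIV. gi $ i $ j *\<^sub>R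
              (PU tm D (H i j) - piL tm \<xi> (X u) (PU tm D (H i j))))"
    unfolding mean_curv_def gi_def g_def D_def[symmetric]
    using nproj_L[OF Dpos p inv'] pD xD by (simp add: D_def H_def)
  have piH: "piL tm \<xi> (X u) (PU tm D (H i j)) = g $ j $ i *\<^sub>R W" for i j
  proof -
    have e1: "mink tm (PU tm D (H i j)) (X u) = mink tm (H i j) (X u)"
      using PU_diff[of tm "X u" D "H i j"] pD by (simp add: D_def mink_diff_left)
    have e2: "mink tm (PU tm D (H i j)) \<xi> = mink tm (H i j) \<xi>"
      using PU_diff[of tm \<xi> D "H i j"] xD by (simp add: D_def mink_diff_left)
    have "piL tm \<xi> (X u) (PU tm D (H i j)) = piL tm \<xi> (X u) (H i j)"
      by (rule piL_cong[OF e1 e2])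
    also have "\<dots> = g $ j $ i *\<^sub>R W"
      using Hxi[of j i] Hp[of j i] unfolding piL_def Let_def pp W_def g_def gram_def H_def
      by (simp add: \<epsilon>_def[symmetric] Dd_def[symmetric] scaleR_diff_right mult.commute)
    finally show ?thesis .
  qed
  have "mean_curv tm UNIV X u - mean_curv tm ?L X u =
        (\<Sum>i\<in>UNIV. \<Sum>j\<in>UNIV. gi $ i $ j *\<^sub>R (g $ j $ i *\<^sub>R W))"
    unfolding mU mL by (simp add: piH flip: sum_subtractf scaleR_diff_right)
  also have "\<dots> = (\<Sum>i\<in>UNIV. \<Sum>j\<in>UNIV. gi $ i $ j * g $ j $ i) *\<^sub>R W"
    by (simp add: scaleR_sum_left)
  also have "\<dots> = real CARD('n) *\<^sub>R W"
    using trace_inv[OF inv] by (simp add: gi_def g_def)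
  finally show ?thesis
    by (simp add: W_def \<epsilon>_def Dd_def scaleR_diff_right algebra_simps)
qed

lemma pd_fd:
  fixes f :: "real^'n::finite \<Rightarrow> real^'k::finite"
  assumes "f differentiable (at u)"
  shows "pd f i u = frechet_derivative f (at u) (axis i 1)"
proof -
  let ?f' = "frechet_derivative f (at u)"
  have fd: "(f has_derivative ?f') (at u)" using assms frechet_derivative_works by blast
  have lin: "linear ?f'" using fd has_derivative_linear by blast
  have ld: "((\<lambda>r::real. u + r *\<^sub>R axis i 1) has_derivative (\<lambda>r. r *\<^sub>R axis i 1)) (at 0)"
    by (auto intro!: derivative_eq_intros)
  have "((f \<circ> (\<lambda>r::real. u + r *\<^sub>R axis i 1)) has_derivative (?f' \<circ> (\<lambda>r. r *\<^sub>R axis i 1))) (at 0)"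
    by (rule diff_chain_at[OF ld]) (simp add: fd)
  moreover have "(?f' \<circ> (\<lambda>r. r *\<^sub>R axis i 1)) = (\<lambda>r. r *\<^sub>R ?f' (axis i 1))"
    using lin by (simp add: o_def linear_scale)
  ultimately have "((\<lambda>r. f (u + r *\<^sub>R axis i 1)) has_vector_derivative ?f' (axis i 1)) (at 0)"
    by (simp add: has_vector_derivative_def o_def)
  then show ?thesis unfolding pd_def by (rule vector_derivative_at)
qed

lemma pd_local:
  fixes f g :: "real^'n::finite \<Rightarrow> real^'k::finite"
  assumes U: "open U" "u \<in> U" and eq: "\<And>v. v \<in> U \<Longrightarrow> f v = g v"
  shows "pd f i u = pd g i u"
proof -
  let ?S = "{r::real. u + r *\<^sub>R axis i 1 \<in> U}"
  have cont: "continuous_on UNIV (\<lambda>r::real. u + r *\<^sub>R axis i 1)" by (intro continuous_intros)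
  have oS: "open ?S" using open_vimage[OF U(1) cont] by (simp add: vimage_def)
  have S0: "0 \<in> ?S" using U by simp
  have "((\<lambda>r. f (u + r *\<^sub>R axis i 1)) has_vector_derivative y) (at 0) \<longleftrightarrow>
        ((\<lambda>r. g (u + r *\<^sub>R axis i 1)) has_vector_derivative y) (at 0)" for y
  proof
    assume "((\<lambda>r. f (u + r *\<^sub>R axis i 1)) has_vector_derivative y) (at 0)"
    then show "((\<lambda>r. g (u + r *\<^sub>R axis i 1)) has_vector_derivative y) (at 0)"
      by (rule has_vector_derivative_transform_within_open[OF _ oS S0]) (simp add: eq)
  next
    assume "((\<lambda>r. g (u + r *\<^sub>R axis i 1)) has_vector_derivative y) (at 0)"
    then show "((\<lambda>r. f (u + r *\<^sub>R axis i 1)) has_vector_derivative y) (at 0)"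
      by (rule has_vector_derivative_transform_within_open[OF _ oS S0]) (simp add: eq)
  qed
  then show ?thesis unfolding pd_def vector_derivative_def by simp
qed

lemma fd_local:
  fixes f g :: "'a::euclidean_space \<Rightarrow> 'b::real_normed_vector"
  assumes U: "open U" "x \<in> U" and eq: "\<And>v. v \<in> U \<Longrightarrow> f v = g v" and d: "f differentiable (at x)"
  shows "g differentiable (at x) \<and> frechet_derivative g (at x) = frechet_derivative f (at x)"
proof -
  have "(f has_derivative frechet_derivative f (at x)) (at x)" using d frechet_derivative_works by blast
  then have "(g has_derivative frechet_derivative f (at x)) (at x)"
    by (rule has_derivative_transform_within_open[OF _ U]) (simp add: eq)
  then have g': "(g has_derivative frechet_derivative f (at x)) (at x)" .
  then have "g differentiable (at x)" by (rule differentiableI)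
  moreover have "frechet_derivative f (at x) = frechet_derivative g (at x)" by (rule frechet_derivative_at[OF g'])
  ultimately show ?thesis by simp
qed

lemma Ck_cong:
  fixes f g :: "'a::euclidean_space \<Rightarrow> 'b::real_normed_vector"
  assumes "open U" "\<And>x. x \<in> U \<Longrightarrow> f x = g x" "Ck k f U"
  shows "Ck k g U"
  using assms
proof (induction k arbitrary: f g)
  case 0
  have "continuous_on U f = continuous_on U g" by (rule continuous_on_cong[OF refl]) (use 0 in auto)
  then show ?case using 0 by simp
next
  case (Suc k)
  have df: "f differentiable (at x)" if "x \<in> U" for x using Suc.prems(3) that by simp
  have de: "g differentiable (at x) \<and> frechet_derivative g (at x) = frechet_derivative f (at x)"
    if "x \<in> U" for x by (rule fd_local[OF Suc.prems(1) that Suc.prems(2) df[OF that]])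
  have d: "\<forall>x\<in>U. g differentiable (at x)" using de by blast
  have e: "frechet_derivative g (at x) = frechet_derivative f (at x)" if "x \<in> U" for x
    using de that by blast
  show ?case
  proof (simp only: Ck.simps, intro conjI ballI)
    fix x assume "x \<in> U" then show "g differentiable at x" using d by blast
  next
    fix i :: 'a assume i: "i \<in> Basis"
    have "Ck k (\<lambda>x. frechet_derivative f (at x) i) U" using Suc.prems(3) i by simp
    then show "Ck k (\<lambda>x. frechet_derivative g (at x) i) U"
      by (rule Suc.IH[rotated 2]) (use Suc.prems(1) e in auto)
  qed
qed

lemma Ck_affine:
  fixes f :: "'a::euclidean_space \<Rightarrow> 'b::real_normed_vector"
  assumes "open U" "Ck k f U"
  shows "Ck k (\<lambda>x. c *\<^sub>R f x + d) U"
  using assms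
proof (induction k arbitrary: f d)
  case 0 then show ?case by (auto intro!: continuous_intros)
next
  case (Suc k)
  have df: "\<forall>x\<in>U. f differentiable (at x)" using Suc.prems by simp
  have e: "frechet_derivative (\<lambda>x. c *\<^sub>R f x + d) (at x) = (\<lambda>h. c *\<^sub>R frechet_derivative f (at x) h)"
    if "x \<in> U" for x
  proof -
    have "(f has_derivative frechet_derivative f (at x)) (at x)"
      using df that frechet_derivative_works by blast
    then have "((\<lambda>x. c *\<^sub>R f x + d) has_derivative (\<lambda>h. c *\<^sub>R frechet_derivative f (at x) h)) (at x)"
      by (auto intro!: derivative_eq_intros)
    then show ?thesis by (rule frechet_derivative_at[symmetric])
  qed
  show ?case
  proof (simp only: Ck.simps, intro conjI ballI)
    fix x assume "x \<in> U" then show "(\<lambda>x. c *\<^sub>R f x + d) differentiable at x"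
      using df by (auto intro!: derivative_intros)
  next
    fix i :: 'a assume i: "i \<in> Basis"
    have "Ck k (\<lambda>x. frechet_derivative f (at x) i) U" using Suc.prems(2) i by simp
    then have "Ck k (\<lambda>x. c *\<^sub>R frechet_derivative f (at x) i + 0) U"
      by (rule Suc.IH[OF Suc.prems(1)])
    then show "Ck k (\<lambda>x. frechet_derivative (\<lambda>x. c *\<^sub>R f x + d) (at x) i) U"
      by (rule Ck_cong[OF Suc.prems(1), rotated]) (simp add: e)
  qed
qed

lemma const_deriv_open:
  fixes f :: "'a::real_normed_vector \<Rightarrow> real"
  assumes "(f has_derivative f') (at v)" "open U" "v \<in> U" "\<And>w. w \<in> U \<Longrightarrow> f w = c"
  shows "f' h = 0"
proof -
  have "((\<lambda>w. c) has_derivative (\<lambda>_. 0)) (at v)" by (rule has_derivative_const)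
  then have "(f has_derivative (\<lambda>_. 0)) (at v)"
    by (rule has_derivative_transform_within_open[OF _ assms(2,3)]) (simp add: assms(4))
  then have "f' = (\<lambda>_. 0)" using assms(1) has_derivative_unique by blast
  then show ?thesis by simp
qed

lemma Ck2_D:
  fixes X :: "real^'n::finite \<Rightarrow> real^'k::finite"
  assumes "Ck 2 X U"
  shows "\<And>v. v \<in> U \<Longrightarrow> X differentiable (at v)"
    and "\<And>v. v \<in> U \<Longrightarrow> (\<lambda>x. frechet_derivative X (at x) (axis j 1)) differentiable (at v)"
proof -
  have c: "Ck (Suc (Suc 0)) X U" using assms by (simp add: numeral_2_eq_2)
  show "\<And>v. v \<in> U \<Longrightarrow> X differentiable (at v)" using c by simp
  show "\<And>v. v \<in> U \<Longrightarrow> (\<lambda>x. frechet_derivative X (at x) (axis j 1)) differentiable (at v)"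
    using c by (simp add: Basis_vec_def)
qed

lemma X_facts:
  fixes X :: "real^'n::finite \<Rightarrow> real^'k::finite"
  assumes U: "open U" "u \<in> U" and C: "Ck 2 X U"
    and L1: "\<And>v. v \<in> U \<Longrightarrow> mink tm (X v) (X v) = -1"
    and L2: "\<And>v. v \<in> U \<Longrightarrow> mink tm (X v) \<xi> = a"
  shows "mink tm (X u) (pd X i u) = 0" "mink tm \<xi> (pd X i u) = 0"
    "mink tm (pd (pd X j) i u) \<xi> = 0"
    "mink tm (pd (pd X j) i u) (X u) = - mink tm (pd X j u) (pd X i u)"
proof -
  define DX where "DX = (\<lambda>j v. frechet_derivative X (at v) (axis j 1))"
  have dX: "\<And>v. v \<in> U \<Longrightarrow> X differentiable (at v)" using Ck2_D[OF C] by blast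
  have dDX: "\<And>v. v \<in> U \<Longrightarrow> DX j differentiable (at v)" for j using Ck2_D(2)[OF C] by (simp add: DX_def)
  have pdX: "\<And>v. v \<in> U \<Longrightarrow> pd X j v = DX j v" for j using pd_fd[OF dX] by (simp add: DX_def)
  have first: "mink tm (X v) (DX j v) = 0 \<and> mink tm (DX j v) \<xi> = 0" if v: "v \<in> U" for v j
  proof -
    have fX: "(X has_derivative frechet_derivative X (at v)) (at v)"
      using dX[OF v] frechet_derivative_works by blast
    have h1: "((\<lambda>w. mink tm (X w) (X w)) has_derivative
        (\<lambda>h. mink tm (frechet_derivative X (at v) h) (X v) + mink tm (X v) (frechet_derivative X (at v) h))) (at v)"
      by (rule has_derivative_mink[OF fX fX])
    from const_deriv_open[OF h1 U(1) v L1, of "axis j 1"]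
    have "mink tm (X v) (DX j v) = 0" by (simp add: DX_def mink_sym)
    moreover
    have h2: "((\<lambda>w. mink tm (X w) \<xi>) has_derivative
        (\<lambda>h. mink tm (frechet_derivative X (at v) h) \<xi> + mink tm (X v) 0)) (at v)"
      by (rule has_derivative_mink[OF fX has_derivative_const])
    from const_deriv_open[OF h2 U(1) v L2, of "axis j 1"]
    have "mink tm (DX j v) \<xi> = 0" by (simp add: DX_def)
    ultimately show ?thesis by simp
  qed
  show "mink tm (X u) (pd X i u) = 0" using first[OF U(2)] pdX[OF U(2)] by simp
  show "mink tm \<xi> (pd X i u) = 0" using first[OF U(2)] pdX[OF U(2)] by (simp add: mink_sym)
  have ppd: "pd (pd X j) i u = frechet_derivative (DX j) (at u) (axis i 1)"
  proof -
    have "pd (pd X j) i u = pd (DX j) i u" by (rule pd_local[OF U]) (simp add: pdX)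
    also have "\<dots> = frechet_derivative (DX j) (at u) (axis i 1)" by (rule pd_fd[OF dDX[OF U(2)]])
    finally show ?thesis .
  qed
  have fX: "(X has_derivative frechet_derivative X (at u)) (at u)"
    using dX[OF U(2)] frechet_derivative_works by blast
  have fD: "(DX j has_derivative frechet_derivative (DX j) (at u)) (at u)"
    using dDX[OF U(2)] frechet_derivative_works by blast
  have h3: "((\<lambda>w. mink tm (DX j w) \<xi>) has_derivative
      (\<lambda>h. mink tm (frechet_derivative (DX j) (at u) h) \<xi> + mink tm (DX j u) 0)) (at u)"
    by (rule has_derivative_mink[OF fD has_derivative_const])
  from const_deriv_open[OF h3 U, of 0 "axis i 1"] first
  show "mink tm (pd (pd X j) i u) \<xi> = 0" by (simp add: ppd)
  have h4: "((\<lambda>w. mink tm (DX j w) (X w)) has_derivative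
      (\<lambda>h. mink tm (frechet_derivative (DX j) (at u) h) (X u) + mink tm (DX j u) (frechet_derivative X (at u) h))) (at u)"
    by (rule has_derivative_mink[OF fD fX])
  have z: "\<And>w. w \<in> U \<Longrightarrow> mink tm (DX j w) (X w) = 0" using first by (simp add: mink_sym)
  have "mink tm (frechet_derivative (DX j) (at u) (axis i 1)) (X u) +
        mink tm (DX j u) (frechet_derivative X (at u) (axis i 1)) = 0"
    using const_deriv_open[OF h4 U z] by simp
  then have "mink tm (pd (pd X j) i u) (X u) + mink tm (DX j u) (DX i u) = 0"
    by (simp add: ppd DX_def)
  then show "mink tm (pd (pd X j) i u) (X u) = - mink tm (pd X j u) (pd X i u)"
    using pdX[OF U(2)] by simp
qed

lemma mmult_scaleR_left: "((k::real) *\<^sub>R A) ** (B::real^'n::finite^'m::finite) = k *\<^sub>R (A ** B)"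
  by (simp add: vec_eq_iff matrix_matrix_mult_def sum_distrib_left mult.assoc)

lemma mmult_scaleR_right: "(A::real^'n::finite^'m::finite) ** ((k::real) *\<^sub>R B) = k *\<^sub>R (A ** B)"
  by (simp add: vec_eq_iff matrix_matrix_mult_def sum_distrib_left mult.left_commute)

lemma matrix_inv_scaleR:
  fixes A :: "real^'n::finite^'n"
  assumes "invertible A" "k \<noteq> 0"
  shows "matrix_inv (k *\<^sub>R A) = (1/k) *\<^sub>R matrix_inv A"
proof -
  let ?B = "matrix_inv (k *\<^sub>R A)"
  have iA: "invertible (k *\<^sub>R A)" using scalar_invertible assms by blast
  have b1: "(k *\<^sub>R A) ** ?B = mat 1" using minv[OF iA] by blast
  have a2: "matrix_inv A ** A = mat 1" using minv[OF assms(1)] by blast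
  have "matrix_inv A = matrix_inv A ** (A ** (k *\<^sub>R ?B))"
    using b1 by (simp add: mmult_scaleR_left mmult_scaleR_right)
  also have "\<dots> = k *\<^sub>R ?B" by (simp add: matrix_mul_assoc a2)
  finally show ?thesis using assms(2) by simp
qed

lemma PU_scale: "PU tm D (c *\<^sub>R x) = c *\<^sub>R PU tm D x"
  by (simp add: PU_def mink_scale_left scaleR_diff_right scaleR_sum_right sum_distrib_left mult.left_commute)

lemma fd_affine:
  assumes "X differentiable (at v)"
  shows "frechet_derivative (\<lambda>v. c *\<^sub>R X v + d) (at v) = (\<lambda>h. c *\<^sub>R frechet_derivative X (at v) h)"
proof -
  have "(X has_derivative frechet_derivative X (at v)) (at v)" using assms frechet_derivative_works by blast
  then have "((\<lambda>v. c *\<^sub>R X v + d) has_derivative (\<lambda>h. c *\<^sub>R frechet_derivative X (at v) h)) (at v)"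
    by (auto intro!: derivative_eq_intros)
  then show ?thesis by (rule frechet_derivative_at[symmetric])
qed

lemma ppd_fd:
  fixes X :: "real^'n::finite \<Rightarrow> real^'k::finite"
  assumes U: "open U" "u \<in> U" and C: "Ck 2 X U"
  shows "pd (pd X j) i u = frechet_derivative (\<lambda>v. frechet_derivative X (at v) (axis j 1)) (at u) (axis i 1)"
proof -
  have dX: "\<And>v. v \<in> U \<Longrightarrow> X differentiable (at v)" using Ck2_D[OF C] by blast
  have "pd (pd X j) i u = pd (\<lambda>v. frechet_derivative X (at v) (axis j 1)) i u"
    by (rule pd_local[OF U]) (simp add: pd_fd[OF dX])
  also have "\<dots> = frechet_derivative (\<lambda>v. frechet_derivative X (at v) (axis j 1)) (at u) (axis i 1)"
    by (rule pd_fd[OF Ck2_D(2)[OF C U(2)]])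
  finally show ?thesis .
qed

lemma mc_scale:
  fixes X :: "real^'n::finite \<Rightarrow> real^'k::finite"
  assumes U: "open U" "u \<in> U" and C: "Ck 2 X U" and c: "c \<noteq> 0"
    and inv: "invertible (gram tm X u)"
  shows "gram tm (\<lambda>v. c *\<^sub>R X v + d) u = c\<^sup>2 *\<^sub>R gram tm X u"
    and "mean_curv tm UNIV (\<lambda>v. c *\<^sub>R X v + d) u = (1/c) *\<^sub>R mean_curv tm UNIV X u"
proof -
  define Y where "Y = (\<lambda>v. c *\<^sub>R X v + d)"
  have dX: "\<And>v. v \<in> U \<Longrightarrow> X differentiable (at v)" using Ck2_D[OF C] by blast
  have dY: "\<And>v. v \<in> U \<Longrightarrow> Y differentiable (at v)" unfolding Y_def using dX by (auto intro!: derivative_intros)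
  have pdY: "pd Y l v = c *\<^sub>R pd X l v" if "v \<in> U" for l v
    using pd_fd[OF dY[OF that]] pd_fd[OF dX[OF that]] fd_affine[OF dX[OF that]] by (simp add: Y_def)
  show g: "gram tm (\<lambda>v. c *\<^sub>R X v + d) u = c\<^sup>2 *\<^sub>R gram tm X u"
    unfolding Y_def[symmetric]
    by (simp add: gram_def pdY[OF U(2)] vec_eq_iff mink_scale_left mink_scale_right power2_eq_square)
  have CY: "Ck 2 Y U" unfolding Y_def by (rule Ck_affine[OF U(1) C])
  have ppY: "pd (pd Y j) i u = c *\<^sub>R pd (pd X j) i u" for i j
  proof -
    have "pd (pd Y j) i u = frechet_derivative (\<lambda>v. frechet_derivative Y (at v) (axis j 1)) (at u) (axis i 1)"
      by (rule ppd_fd[OF U CY])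
    also have "\<dots> = frechet_derivative (\<lambda>v. c *\<^sub>R frechet_derivative X (at v) (axis j 1) + 0) (at u) (axis i 1)"
    proof -
      have "frechet_derivative (\<lambda>v. frechet_derivative Y (at v) (axis j 1)) (at u) =
            frechet_derivative (\<lambda>v. c *\<^sub>R frechet_derivative X (at v) (axis j 1) + 0) (at u)"
        using fd_local[OF U, of "\<lambda>v. c *\<^sub>R frechet_derivative X (at v) (axis j 1) + 0"
              "\<lambda>v. frechet_derivative Y (at v) (axis j 1)"] Ck2_D(2)[OF C U(2), of j]
        by (auto simp: Y_def fd_affine[OF dX] intro!: derivative_intros)
      then show ?thesis by simp
    qed
    also have "\<dots> = c *\<^sub>R frechet_derivative (\<lambda>v. frechet_derivative X (at v) (axis j 1)) (at u) (axis i 1)"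
      using fd_affine[where c=c and d=0, OF Ck2_D(2)[OF C U(2), of j]] by simp
    also have "\<dots> = c *\<^sub>R pd (pd X j) i u" using ppd_fd[OF U C] by simp
    finally show ?thesis .
  qed
  have invD: "invertible (gramD tm (\<lambda>l. pd X l u))" using inv by (simp add: gram_gramD)
  have np: "nproj tm UNIV (Y u) (\<lambda>l. pd Y l u) w = PU tm (\<lambda>l. pd X l u) w" for w
  proof -
    have NS: "normal_space tm UNIV (Y u) (\<lambda>l. pd Y l u) = {w. \<forall>i. mink tm w (pd X i u) = 0}"
      using c by (simp add: normal_UNIV pdY[OF U(2)] mink_scale_right)
    show ?thesis
    proof (rule nproj_eqI)
      fix x z assume "z \<in> normal_space tm UNIV (Y u) (\<lambda>l. pd Y l u)"
      then show "mink tm (x - PU tm (\<lambda>l. pd X l u) x) z = 0" unfolding NS by (intro PU_diff) auto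
    qed (auto simp: NS mink_diff_left PU_perp[OF invD])
  qed
  have mX: "mean_curv tm UNIV X u = (\<Sum>i\<in>UNIV. \<Sum>j\<in>UNIV. matrix_inv (gram tm X u) $ i $ j *\<^sub>R
              PU tm (\<lambda>l. pd X l u) (pd (pd X j) i u))"
    unfolding mean_curv_def by (simp add: nproj_UNIV[OF invD])
  have "mean_curv tm UNIV Y u = (\<Sum>i\<in>UNIV. \<Sum>j\<in>UNIV. ((1/c\<^sup>2) * matrix_inv (gram tm X u) $ i $ j) *\<^sub>R
              (c *\<^sub>R PU tm (\<lambda>l. pd X l u) (pd (pd X j) i u)))"
    unfolding mean_curv_def np ppY g[unfolded Y_def[symmetric]] PU_scale
    using matrix_inv_scaleR[OF inv, of "c\<^sup>2"] c by simp
  also have "\<dots> = (1/c) *\<^sub>R mean_curv tm UNIV X u"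
    unfolding mX scaleR_sum_right using c
    by (intro sum.cong refl) (simp add: power2_eq_square)
  finally show "mean_curv tm UNIV (\<lambda>v. c *\<^sub>R X v + d) u = (1/c) *\<^sub>R mean_curv tm UNIV X u"
    by (simp add: Y_def)
qed

lemma mcf_transform:
  fixes f1 :: "real^'k::finite \<Rightarrow> real \<Rightarrow> real^'k" and \<xi> :: "real^'k"
    and c \<sigma> c' \<sigma>' :: "real \<Rightarrow> real" and d d' :: "real \<Rightarrow> real^'k"
  assumes f1: "mcf TYPE('n::finite) tm {x. mink tm x x = -1 \<and> 0 < x$tm \<and> mink tm x \<xi> = a} M I1 f1"
    and Dpos: "mink tm \<xi> \<xi> + a\<^sup>2 > 0"
    and J: "is_interval J" "0 \<in> J"
    and c0: "c 0 = 1" and s0: "\<sigma> 0 = 0" and d0: "d 0 = 0"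
    and cnz: "\<And>t. t \<in> J \<Longrightarrow> c t \<noteq> 0"
    and sJ: "\<And>t. t \<in> J \<Longrightarrow> \<sigma> t \<in> I1"
    and dc: "\<And>t. t \<in> J \<Longrightarrow> (c has_real_derivative c' t) (at t within J)"
    and ds: "\<And>t. t \<in> J \<Longrightarrow> (\<sigma> has_real_derivative \<sigma>' t) (at t within J)"
    and dd: "\<And>t. t \<in> J \<Longrightarrow> (d has_vector_derivative d' t) (at t within J)"
    and id1: "\<And>t. t \<in> J \<Longrightarrow> c t * \<sigma>' t = 1 / c t"
    and id2: "\<And>t y. t \<in> J \<Longrightarrow> c' t *\<^sub>R y + d' t = (1 / c t) *\<^sub>R
        ((real CARD('n) * mink tm \<xi> \<xi> / (mink tm \<xi> \<xi> + a\<^sup>2)) *\<^sub>R y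
         - (real CARD('n) * a / (mink tm \<xi> \<xi> + a\<^sup>2)) *\<^sub>R \<xi>)"
  shows "mcf TYPE('n) tm UNIV M J (\<lambda>x t. c t *\<^sub>R f1 x (\<sigma> t) + d t)"
proof -
  let ?L = "{x. mink tm x x = -1 \<and> 0 < x$tm \<and> mink tm x \<xi> = a}"
  let ?n = "real CARD('n)" and ?D = "mink tm \<xi> \<xi> + a\<^sup>2"
  have f1_0: "\<And>x. x \<in> M \<Longrightarrow> f1 x 0 = x" and f1_in: "\<And>x t. x \<in> M \<Longrightarrow> t \<in> I1 \<Longrightarrow> f1 x t \<in> ?L"
    using f1 unfolding mcf_def by auto
  have f1_ch: "\<And>U (\<phi>::real^'n \<Rightarrow> real^'k) t. chart M U \<phi> \<Longrightarrow> t \<in> I1 \<Longrightarrow>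
        Ck 2 (\<lambda>v. f1 (\<phi> v) t) U \<and>
        (\<forall>u\<in>U. invertible (gram tm (\<lambda>v. f1 (\<phi> v) t) u) \<and>
           ((\<lambda>s. f1 (\<phi> u) s) has_vector_derivative mean_curv tm ?L (\<lambda>v. f1 (\<phi> v) t) u) (at t within I1))"
    using f1 unfolding mcf_def by blast
  have chart_part: "Ck 2 (\<lambda>v. c t *\<^sub>R f1 (\<phi> v) (\<sigma> t) + d t) U \<and>
        (\<forall>u\<in>U. invertible (gram tm (\<lambda>v. c t *\<^sub>R f1 (\<phi> v) (\<sigma> t) + d t) u) \<and>
           ((\<lambda>s. c s *\<^sub>R f1 (\<phi> u) (\<sigma> s) + d s) has_vector_derivative
              mean_curv tm UNIV (\<lambda>v. c t *\<^sub>R f1 (\<phi> v) (\<sigma> t) + d t) u) (at t within J))"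
    if ch: "chart M U \<phi>" and t: "t \<in> J" for U and \<phi> :: "real^'n \<Rightarrow> real^'k" and t
  proof -
    define s where "s = \<sigma> t"
    have sI: "s \<in> I1" using sJ[OF t] by (simp add: s_def)
    define X where "X = (\<lambda>v. f1 (\<phi> v) s)"
    have oU: "open U" using ch by (simp add: chart_def)
    have phiM: "\<And>v. v \<in> U \<Longrightarrow> \<phi> v \<in> M" using ch unfolding chart_def by blast
    have XL: "\<And>v. v \<in> U \<Longrightarrow> X v \<in> ?L" unfolding X_def using f1_in[OF phiM sI] .
    have CX: "Ck 2 X U" and invX: "\<And>u. u \<in> U \<Longrightarrow> invertible (gram tm X u)"
      and derX: "\<And>u. u \<in> U \<Longrightarrow> ((\<lambda>s. f1 (\<phi> u) s) has_vector_derivative mean_curv tm ?L X u) (at s within I1)"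
      using f1_ch[OF ch sI] unfolding X_def by auto
    have ct: "c t \<noteq> 0" by (rule cnz[OF t])
    have Ck: "Ck 2 (\<lambda>v. c t *\<^sub>R X v + d t) U" by (rule Ck_affine[OF oU CX])
    have rest: "invertible (gram tm (\<lambda>v. c t *\<^sub>R X v + d t) u) \<and>
           ((\<lambda>s. c s *\<^sub>R f1 (\<phi> u) (\<sigma> s) + d s) has_vector_derivative
              mean_curv tm UNIV (\<lambda>v. c t *\<^sub>R X v + d t) u) (at t within J)" if u: "u \<in> U" for u
    proof
      have "(c t)\<^sup>2 \<noteq> 0" using ct by simp
      then show "invertible (gram tm (\<lambda>v. c t *\<^sub>R X v + d t) u)"
        unfolding mc_scale(1)[OF oU u CX ct invX[OF u]] by (rule scalar_invertible[OF _ invX[OF u]])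
    next
      have L1: "\<And>v. v \<in> U \<Longrightarrow> mink tm (X v) (X v) = -1" and L2: "\<And>v. v \<in> U \<Longrightarrow> mink tm (X v) \<xi> = a"
        using XL by auto
      note XF = X_facts[OF oU u CX L1 L2]
      have mc: "mean_curv tm UNIV (\<lambda>v. c t *\<^sub>R X v + d t) u = (1 / c t) *\<^sub>R
          (mean_curv tm ?L X u + (?n * mink tm \<xi> \<xi> / ?D) *\<^sub>R X u - (?n * a / ?D) *\<^sub>R \<xi>)"
        unfolding mc_scale(2)[OF oU u CX ct invX[OF u]]
        using mean_curv_diff[OF Dpos XL[OF u] invX[OF u] XF(1) XF(2) XF(3) XF(4)] by simp
      define H where "H = mean_curv tm ?L X u"
      have ds': "(\<sigma> has_vector_derivative \<sigma>' t) (at t within J)"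
        using ds[OF t] by (simp add: has_real_derivative_iff_has_vector_derivative)
      have df1: "((\<lambda>s. f1 (\<phi> u) s) has_vector_derivative H) (at (\<sigma> t) within \<sigma> ` J)"
        using has_vector_derivative_within_subset[OF derX[OF u]] sJ unfolding H_def s_def by blast
      have ch1: "((\<lambda>s'. f1 (\<phi> u) (\<sigma> s')) has_vector_derivative \<sigma>' t *\<^sub>R H) (at t within J)"
        using vector_diff_chain_within[OF ds' df1] by (simp add: o_def)
      have der: "((\<lambda>s. c s *\<^sub>R f1 (\<phi> u) (\<sigma> s) + d s) has_vector_derivative
          (c t *\<^sub>R (\<sigma>' t *\<^sub>R H) + c' t *\<^sub>R f1 (\<phi> u) (\<sigma> t)) + d' t) (at t within J)"
        by (intro has_vector_derivative_add has_vector_derivative_scaleR dc[OF t] ch1 dd[OF t])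
      have eqv: "(c t *\<^sub>R (\<sigma>' t *\<^sub>R H) + c' t *\<^sub>R f1 (\<phi> u) (\<sigma> t)) + d' t =
          (1 / c t) *\<^sub>R (H + (?n * mink tm \<xi> \<xi> / ?D) *\<^sub>R X u - (?n * a / ?D) *\<^sub>R \<xi>)"
      proof -
        have "(c t *\<^sub>R (\<sigma>' t *\<^sub>R H) + c' t *\<^sub>R f1 (\<phi> u) (\<sigma> t)) + d' t
            = (c t * \<sigma>' t) *\<^sub>R H + (c' t *\<^sub>R X u + d' t)"
          by (simp add: X_def s_def algebra_simps)
        also have "\<dots> = (1 / c t) *\<^sub>R H + (1 / c t) *\<^sub>R
            ((?n * mink tm \<xi> \<xi> / ?D) *\<^sub>R X u - (?n * a / ?D) *\<^sub>R \<xi>)"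
          using id1[OF t] id2[OF t] by simp
        also have "\<dots> = (1 / c t) *\<^sub>R (H + (?n * mink tm \<xi> \<xi> / ?D) *\<^sub>R X u - (?n * a / ?D) *\<^sub>R \<xi>)"
          by (simp add: scaleR_right_distrib scaleR_right_diff_distrib)
        finally show ?thesis .
      qed
      show "((\<lambda>s. c s *\<^sub>R f1 (\<phi> u) (\<sigma> s) + d s) has_vector_derivative
              mean_curv tm UNIV (\<lambda>v. c t *\<^sub>R X v + d t) u) (at t within J)"
        unfolding mc using has_vector_derivative_eq_rhs[OF der eqv] by (simp only: H_def)
    qed
    show ?thesis using Ck rest unfolding X_def s_def by blast
  qed
  show ?thesis
    unfolding mcf_def using J chart_part by (simp add: c0 s0 d0 f1_0)
qed

lemma sig_mono:
  fixes n k t t' :: real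
  assumes "n > 0" "k \<noteq> 0" "0 < 2*n*t*k+1" "0 < 2*n*t'*k+1" "t \<le> t'"
  shows "ln (2*n*t*k+1) / (2*n*k) \<le> ln (2*n*t'*k+1) / (2*n*k)"
proof (cases "k > 0")
  case True
  have "2*n*k*t \<le> 2*n*k*t'" using assms True by (intro mult_left_mono) auto
  then have "2*n*t*k+1 \<le> 2*n*t'*k+1" by (simp add: algebra_simps)
  then have "ln (2*n*t*k+1) \<le> ln (2*n*t'*k+1)" using assms by simp
  then show ?thesis using assms True by (intro divide_right_mono) auto
next
  case False
  then have kn: "k < 0" using assms by simp
  have nk: "n*k < 0" using assms(1) kn by (rule mult_pos_neg)
  have nk2: "2*n*k \<le> 0" using nk by (simp add: mult.commute)
  have "2*n*k*t' \<le> 2*n*k*t" using assms(5) nk2 by (rule mult_left_mono_neg)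
  then have "2*n*t'*k+1 \<le> 2*n*t*k+1" by (simp add: algebra_simps)
  then have "ln (2*n*t'*k+1) \<le> ln (2*n*t*k+1)" using assms by simp
  moreover have "2*n*k \<le> 0" by (rule nk2)
  ultimately show ?thesis by (rule divide_right_mono_neg)
qed

lemma pos_between:
  fixes n k t t1 t2 :: real
  assumes "n \<ge> 0" "0 < 2*n*t1*k+1" "0 < 2*n*t2*k+1" "t1 \<le> t" "t \<le> t2"
  shows "0 < 2*n*t*k+1"
proof (cases "k \<ge> 0")
  case True
  have "2*n*k*t1 \<le> 2*n*k*t" using assms True by (intro mult_left_mono) auto
  then show ?thesis using assms by (simp add: algebra_simps)
next
  case False
  have "2*n*k*t2 \<le> 2*n*k*t" using assms False
    by (intro mult_left_mono_neg) (auto simp: mult_nonneg_nonpos)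
  then show ?thesis using assms by (simp add: algebra_simps)
qed

lemma dC:
  fixes n k t :: real
  assumes "0 < 2*n*t*k+1"
  shows "((\<lambda>t. sqrt (2*n*t*k+1)) has_real_derivative n*k / sqrt (2*n*t*k+1)) (at t)"
proof -
  have g: "((\<lambda>t. 2*n*t*k+1) has_real_derivative 2*n*k) (at t)"
    by (auto intro!: derivative_eq_intros)
  have "((\<lambda>t. sqrt (2*n*t*k+1)) has_real_derivative inverse (sqrt (2*n*t*k+1)) / 2 * (2*n*k)) (at t)"
    by (rule DERIV_chain2[OF DERIV_real_sqrt[OF assms] g])
  then show ?thesis by (rule DERIV_cong) (simp add: field_simps)
qed

lemma dS:
  fixes n k t :: real
  assumes "n \<noteq> 0" "k \<noteq> 0" "0 < 2*n*t*k+1"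
  shows "((\<lambda>t. ln (2*n*t*k+1) / (2*n*k)) has_real_derivative 1 / (2*n*t*k+1)) (at t)"
proof -
  have g: "((\<lambda>t. 2*n*t*k+1) has_real_derivative 2*n*k) (at t)"
    by (auto intro!: derivative_eq_intros)
  have "((\<lambda>t. ln (2*n*t*k+1)) has_real_derivative inverse (2*n*t*k+1) * (2*n*k)) (at t)"
    by (rule DERIV_chain2[OF DERIV_ln[OF assms(3)] g])
  then have "((\<lambda>t. ln (2*n*t*k+1) / (2*n*k)) has_real_derivative inverse (2*n*t*k+1) * (2*n*k) / (2*n*k)) (at t)"
    by (rule DERIV_cdivide)
  moreover have "2*n*k \<noteq> 0" using assms by simp
  then have "inverse (2*n*t*k+1) * (2*n*k) / (2*n*k) = 1 / (2*n*t*k+1)"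
    by (simp add: inverse_eq_divide)
  ultimately show ?thesis by (rule DERIV_cong)
qed

theorem lemma4p7:
  fixes tm :: "'k::finite"
    and V :: "(real^'k) set" and u \<xi> :: "real^'k"
    and M :: "(real^'k) set"
    and f1 F :: "real^'k \<Rightarrow> real \<Rightarrow> real^'k"
    and I1 I :: "real set"
  defines "a \<equiv> mink tm u \<xi>"
  defines "\<beta> \<equiv> (mink tm \<xi> \<xi> + a\<^sup>2) powr (-1/2)"
  defines "\<alpha> \<equiv> \<beta> * a"
  defines "n \<equiv> real CARD('n::finite)"
  assumes V: "subspace V" "dim V = CARD('k) - 1"
    and L_ne: "Lset tm V u \<noteq> {}"
    and xi_perp: "\<forall>v\<in>V. mink tm \<xi> v = 0" and xi_nz: "\<xi> \<noteq> 0"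
    and a_nonneg: "a \<ge> 0"
    and xi_norm: "mink tm \<xi> \<xi> \<in> {1, -1, 0}"
    and beta_def: "mink tm \<xi> \<xi> + a\<^sup>2 > 0"
    and M: "M \<subseteq> Lset tm V u" "submanifold TYPE('n) M"
    and f1: "mcf TYPE('n) tm (Lset tm V u) M I1 f1"
    and F: "mcf TYPE('n) tm UNIV M I F"
    and F_unique: "\<And>J G. is_interval J \<Longrightarrow> 0 \<in> J \<Longrightarrow> J \<subseteq> I \<Longrightarrow>
                     mcf TYPE('n) tm UNIV M J G \<Longrightarrow> \<forall>x\<in>M. \<forall>t\<in>J. G x t = F x t"
  shows "(\<alpha> \<noteq> 1 \<longrightarrow>
            (\<forall>x\<in>M. \<forall>t\<in>I. 2*n*t*(1 - \<alpha>\<^sup>2) + 1 > 0 \<longrightarrow>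
               ln (2*n*t*(1 - \<alpha>\<^sup>2) + 1) / (2*n*(1 - \<alpha>\<^sup>2)) \<in> I1 \<longrightarrow>
               F x t = sqrt (2*n*t*(1 - \<alpha>\<^sup>2) + 1) *\<^sub>R
                        (f1 x (ln (2*n*t*(1 - \<alpha>\<^sup>2) + 1) / (2*n*(1 - \<alpha>\<^sup>2)))
                          - (\<alpha> * \<beta> / (1 - \<alpha>\<^sup>2)) *\<^sub>R \<xi>)
                      + (\<alpha> * \<beta> / (1 - \<alpha>\<^sup>2)) *\<^sub>R \<xi>))
       \<and> (\<alpha> = 1 \<longrightarrow> (\<forall>x\<in>M. \<forall>t\<in>I. t \<in> I1 \<longrightarrow> F x t = f1 x t - (n * t * \<beta>) *\<^sub>R \<xi>))"
proof -
  let ?L = "{x. mink tm x x = -1 \<and> 0 < x$tm \<and> mink tm x \<xi> = a}"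
  have LL: "Lset tm V u = ?L" using Lset_char[OF V xi_perp xi_nz] a_def by simp
  have f1': "mcf TYPE('n) tm ?L M I1 f1" using f1 LL by simp
  define \<epsilon> where "\<epsilon> = mink tm \<xi> \<xi>"
  define Dd where "Dd = \<epsilon> + a\<^sup>2"
  have Dpos: "Dd > 0" using beta_def by (simp add: Dd_def \<epsilon>_def)
  have bpos: "\<beta> > 0" unfolding \<beta>_def using beta_def by simp
  have b2: "\<beta>\<^sup>2 = 1 / Dd"
  proof -
    have "\<beta>\<^sup>2 = \<beta> * \<beta>" by (simp add: power2_eq_square)
    also have "\<dots> = Dd powr (-1/2 + -1/2)" unfolding \<beta>_def powr_add Dd_def \<epsilon>_def by simp
    also have "\<dots> = Dd powr (- 1)" by simp
    also have "\<dots> = 1 / Dd" using Dpos by (simp add: powr_minus inverse_eq_divide)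
    finally show ?thesis .
  qed
  have a2: "\<alpha>\<^sup>2 = a\<^sup>2 / Dd" unfolding \<alpha>_def using b2 by (simp add: power_mult_distrib)
  have kk: "1 - \<alpha>\<^sup>2 = \<epsilon> / Dd" using a2 Dpos by (simp add: Dd_def field_simps)
  have ab: "\<alpha> * \<beta> = a / Dd"
  proof -
    have "\<alpha> * \<beta> = \<beta>\<^sup>2 * a" unfolding \<alpha>_def by (simp add: power2_eq_square mult_ac)
    then show ?thesis using b2 by simp
  qed
  have Iint: "is_interval I" "0 \<in> I" using F unfolding mcf_def by auto
  have I1int: "is_interval I1" "0 \<in> I1" using f1 unfolding mcf_def by auto
  have n0: "n > 0" unfolding n_def by simp
  have Dpos': "mink tm \<xi> \<xi> + a\<^sup>2 > 0" using beta_def .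
  have nD: "real CARD('n) = n" by (simp add: n_def)
  show ?thesis
  proof (intro conjI impI)
    assume a1: "\<alpha> \<noteq> 1"
    have al0: "\<alpha> \<ge> 0" unfolding \<alpha>_def using bpos a_nonneg by simp
    have knz: "1 - \<alpha>\<^sup>2 \<noteq> 0"
    proof
      assume "1 - \<alpha>\<^sup>2 = 0"
      then have "\<alpha>\<^sup>2 = 1\<^sup>2" by simp
      then have "\<alpha> = 1" using al0 power2_eq_iff_nonneg[of \<alpha> 1] by simp
      then show False using a1 by simp
    qed
    define C where "C = (\<lambda>t. sqrt (2*n*t*(1 - \<alpha>\<^sup>2)+1))"
    define \<sigma> where "\<sigma> = (\<lambda>t. ln (2*n*t*(1 - \<alpha>\<^sup>2)+1) / (2*n*(1 - \<alpha>\<^sup>2)))"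
    define \<eta> where "\<eta> = (\<alpha> * \<beta> / (1 - \<alpha>\<^sup>2)) *\<^sub>R \<xi>"
    define J where "J = {t\<in>I. 0 < 2*n*t*(1 - \<alpha>\<^sup>2)+1 \<and> \<sigma> t \<in> I1}"
    define c' where "c' = (\<lambda>t. n*(1 - \<alpha>\<^sup>2) / C t)"
    have Cpos: "C t > 0" if "t \<in> J" for t using that by (simp add: J_def C_def)
    have JI: "J \<subseteq> I" by (auto simp: J_def)
    have J0: "0 \<in> J" using Iint I1int by (simp add: J_def \<sigma>_def)
    have Jint: "is_interval J"
      unfolding is_interval_1
    proof (intro ballI allI impI)
      fix t1 t2 t assume t1: "t1 \<in> J" and t2: "t2 \<in> J" and tt: "t1 \<le> t \<and> t \<le> t2"
      have tI: "t \<in> I" using Iint(1) t1 t2 tt unfolding is_interval_1 J_def by blast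
      have p1: "0 < 2*n*t1*(1 - \<alpha>\<^sup>2)+1" and p2: "0 < 2*n*t2*(1 - \<alpha>\<^sup>2)+1" using t1 t2 by (auto simp: J_def)
      have pt: "0 < 2*n*t*(1 - \<alpha>\<^sup>2)+1" using pos_between[OF _ p1 p2] n0 tt by auto
      have s1: "\<sigma> t1 \<le> \<sigma> t" unfolding \<sigma>_def using sig_mono[OF n0 knz p1 pt] tt by simp
      have s2: "\<sigma> t \<le> \<sigma> t2" unfolding \<sigma>_def using sig_mono[OF n0 knz pt p2] tt by simp
      have "\<sigma> t \<in> I1" using I1int(1) t1 t2 s1 s2 unfolding is_interval_1 J_def by blast
      then show "t \<in> J" using tI pt by (simp add: J_def)
    qed
    have dc: "(C has_real_derivative c' t) (at t within J)" if "t \<in> J" for t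
    proof -
      have p: "0 < 2*n*t*(1 - \<alpha>\<^sup>2)+1" using that by (simp add: J_def)
      show ?thesis unfolding C_def c'_def by (rule has_field_derivative_at_within[OF dC[OF p]])
    qed
    have ds: "(\<sigma> has_real_derivative 1 / (2*n*t*(1 - \<alpha>\<^sup>2)+1)) (at t within J)" if "t \<in> J" for t
    proof -
      have p: "0 < 2*n*t*(1 - \<alpha>\<^sup>2)+1" using that by (simp add: J_def)
      have nn: "n \<noteq> 0" using n0 by simp
      show ?thesis unfolding \<sigma>_def by (rule has_field_derivative_at_within[OF dS[OF nn knz p]])
    qed
    have dd: "((\<lambda>t. \<eta> - C t *\<^sub>R \<eta>) has_vector_derivative - (c' t *\<^sub>R \<eta>)) (at t within J)" if "t \<in> J" for t
    proof -
      have "((\<lambda>t. \<eta> - C t *\<^sub>R \<eta>) has_vector_derivative 0 - (C t *\<^sub>R 0 + c' t *\<^sub>R \<eta>)) (at t within J)"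
        by (intro has_vector_derivative_diff has_vector_derivative_const has_vector_derivative_scaleR dc[OF that])
      then show ?thesis by simp
    qed
    have id1: "C t * (1 / (2*n*t*(1 - \<alpha>\<^sup>2)+1)) = 1 / C t" if "t \<in> J" for t
    proof -
      have p: "0 < 2*n*t*(1 - \<alpha>\<^sup>2)+1" using that by (simp add: J_def)
      have "C t * C t = 2*n*t*(1 - \<alpha>\<^sup>2)+1" unfolding C_def using p by simp
      then show ?thesis using Cpos[OF that] p by (simp add: field_simps)
    qed
    have id2: "c' t *\<^sub>R y + - (c' t *\<^sub>R \<eta>) = (1 / C t) *\<^sub>R
        ((real CARD('n) * mink tm \<xi> \<xi> / (mink tm \<xi> \<xi> + a\<^sup>2)) *\<^sub>R y
         - (real CARD('n) * a / (mink tm \<xi> \<xi> + a\<^sup>2)) *\<^sub>R \<xi>)" if "t \<in> J" for t y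
    proof -
      have e1: "c' t = (1 / C t) * (n * \<epsilon> / Dd)" unfolding c'_def kk by simp
      have e2: "c' t * (\<alpha> * \<beta> / (1 - \<alpha>\<^sup>2)) = (1 / C t) * (n * a / Dd)"
      proof -
        have cz: "C t \<noteq> 0" using Cpos[OF that] by simp
        have dz: "Dd \<noteq> 0" using Dpos by simp
        show ?thesis unfolding c'_def ab using knz cz dz by (simp add: field_simps)
      qed
      have "c' t *\<^sub>R y + - (c' t *\<^sub>R \<eta>) = c' t *\<^sub>R y - (c' t * (\<alpha> * \<beta> / (1 - \<alpha>\<^sup>2))) *\<^sub>R \<xi>"
        by (simp add: \<eta>_def)
      also have "\<dots> = ((1 / C t) * (n * \<epsilon> / Dd)) *\<^sub>R y - ((1 / C t) * (n * a / Dd)) *\<^sub>R \<xi>"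
        by (simp only: e2) (simp only: e1)
      also have "\<dots> = (1 / C t) *\<^sub>R ((n * \<epsilon> / Dd) *\<^sub>R y - (n * a / Dd) *\<^sub>R \<xi>)"
        by (simp add: scaleR_diff_right)
      finally show ?thesis by (simp add: nD \<epsilon>_def Dd_def)
    qed
    have mcfG: "mcf TYPE('n) tm UNIV M J (\<lambda>x t. C t *\<^sub>R f1 x (\<sigma> t) + (\<eta> - C t *\<^sub>R \<eta>))"
    proof (rule mcf_transform[OF f1' Dpos' Jint J0])
      show "C 0 = 1" by (simp add: C_def)
      show "\<sigma> 0 = 0" by (simp add: \<sigma>_def)
      show "\<eta> - C 0 *\<^sub>R \<eta> = 0" by (simp add: C_def)
      show "\<And>t. t \<in> J \<Longrightarrow> C t \<noteq> 0" using Cpos by force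
      show "\<And>t. t \<in> J \<Longrightarrow> \<sigma> t \<in> I1" by (simp add: J_def)
    qed (use dc ds dd id1 id2 in auto)
    have GF: "\<forall>x\<in>M. \<forall>t\<in>J. C t *\<^sub>R f1 x (\<sigma> t) + (\<eta> - C t *\<^sub>R \<eta>) = F x t"
      using F_unique[OF Jint J0 JI mcfG] by simp
    show "\<forall>x\<in>M. \<forall>t\<in>I. 2*n*t*(1 - \<alpha>\<^sup>2) + 1 > 0 \<longrightarrow>
               ln (2*n*t*(1 - \<alpha>\<^sup>2) + 1) / (2*n*(1 - \<alpha>\<^sup>2)) \<in> I1 \<longrightarrow>
               F x t = sqrt (2*n*t*(1 - \<alpha>\<^sup>2) + 1) *\<^sub>R
                        (f1 x (ln (2*n*t*(1 - \<alpha>\<^sup>2) + 1) / (2*n*(1 - \<alpha>\<^sup>2)))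
                          - (\<alpha> * \<beta> / (1 - \<alpha>\<^sup>2)) *\<^sub>R \<xi>)
                      + (\<alpha> * \<beta> / (1 - \<alpha>\<^sup>2)) *\<^sub>R \<xi>"
    proof (intro ballI impI)
      fix x t assume x: "x \<in> M" and t: "t \<in> I" and p: "2*n*t*(1 - \<alpha>\<^sup>2) + 1 > 0"
        and s: "ln (2*n*t*(1 - \<alpha>\<^sup>2) + 1) / (2*n*(1 - \<alpha>\<^sup>2)) \<in> I1"
      have tJ: "t \<in> J" using t p s by (simp add: J_def \<sigma>_def)
      have "F x t = C t *\<^sub>R f1 x (\<sigma> t) + (\<eta> - C t *\<^sub>R \<eta>)" using GF x tJ by simp
      also have "\<dots> = C t *\<^sub>R (f1 x (\<sigma> t) - \<eta>) + \<eta>" by (simp add: scaleR_diff_right)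
      finally show "F x t = sqrt (2*n*t*(1 - \<alpha>\<^sup>2) + 1) *\<^sub>R
                        (f1 x (ln (2*n*t*(1 - \<alpha>\<^sup>2) + 1) / (2*n*(1 - \<alpha>\<^sup>2)))
                          - (\<alpha> * \<beta> / (1 - \<alpha>\<^sup>2)) *\<^sub>R \<xi>)
                      + (\<alpha> * \<beta> / (1 - \<alpha>\<^sup>2)) *\<^sub>R \<xi>"
        by (simp add: C_def \<sigma>_def \<eta>_def)
    qed
  next
    assume a1: "\<alpha> = 1"
    have anz: "a \<noteq> 0" using a1 unfolding \<alpha>_def by auto
    have ba: "\<beta> = 1 / a" using a1 anz unfolding \<alpha>_def by (simp add: field_simps)
    have "a\<^sup>2 / Dd = 1" using a2 a1 anz by simp
    then have Da: "Dd = a\<^sup>2" using Dpos by (simp add: field_simps)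
    then have e0: "\<epsilon> = 0" by (simp add: Dd_def)
    define J where "J = I \<inter> I1"
    have Jint: "is_interval J" unfolding J_def by (rule is_interval_Int[OF Iint(1) I1int(1)])
    have J0: "0 \<in> J" using Iint I1int by (simp add: J_def)
    have JI: "J \<subseteq> I" by (auto simp: J_def)
    have mcfG: "mcf TYPE('n) tm UNIV M J (\<lambda>x t. (\<lambda>t. 1) t *\<^sub>R f1 x ((\<lambda>t. t) t) + (\<lambda>t. - (n * t * \<beta>) *\<^sub>R \<xi>) t)"
    proof (rule mcf_transform[OF f1' Dpos' Jint J0, where c' = "\<lambda>t. 0" and \<sigma>' = "\<lambda>t. 1"
             and d' = "\<lambda>t. - (n * \<beta>) *\<^sub>R \<xi>"])
      fix t assume t: "t \<in> J"
      show "((\<lambda>t. 1) has_real_derivative 0) (at t within J)" by (rule DERIV_const)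
      show "((\<lambda>t. t) has_real_derivative 1) (at t within J)" by (rule DERIV_ident)
      show "((\<lambda>t. - (n * t * \<beta>) *\<^sub>R \<xi>) has_vector_derivative - (n * \<beta>) *\<^sub>R \<xi>) (at t within J)"
        by (auto intro!: derivative_eq_intros)
    next
      fix t y
      have "n * a / Dd = n * \<beta>" using Da ba anz by (simp add: power2_eq_square)
      then show "0 *\<^sub>R y + - (n * \<beta>) *\<^sub>R \<xi> = (1 / 1) *\<^sub>R
        ((real CARD('n) * mink tm \<xi> \<xi> / (mink tm \<xi> \<xi> + a\<^sup>2)) *\<^sub>R y
         - (real CARD('n) * a / (mink tm \<xi> \<xi> + a\<^sup>2)) *\<^sub>R \<xi>)"
        using e0 by (simp add: nD \<epsilon>_def Dd_def)
    qed (auto simp: J_def)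
    have GF: "\<forall>x\<in>M. \<forall>t\<in>J. f1 x t - (n * t * \<beta>) *\<^sub>R \<xi> = F x t"
      using F_unique[OF Jint J0 JI mcfG] by simp
    show "\<forall>x\<in>M. \<forall>t\<in>I. t \<in> I1 \<longrightarrow> F x t = f1 x t - (n * t * \<beta>) *\<^sub>R \<xi>"
      using GF by (simp add: J_def)
  qed
qed

end
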